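(* Let $J:[0,1]\to[0,\infty)$ with $\int_{\mathbb{Z}_p}J(|x|_p)dx=1$, extended by zero outside $\mathbb{Z}_p$, and let $\widehat J(|\xi|_p)$ be its Fourier transform (a radial function of $\xi\in\mathbb{Q}_p$). For $t>0$ let $\boldsymbol{J}(Z_0(x,t)):=\mathcal{F}^{-1}_{\xi\to x}\big(\{\widehat J(|\xi|_p)-1\}e^{-t(1-\widehat J(|\xi|_p))}\big)\in\mathcal{D}'(\mathbb{Z}_p)$. Then for $x\in\mathbb{Z}_p\smallsetminus\{0\}$ and $t>0$, $\boldsymbol{J}(Z_0(x,t))=\sum_{j=1}^{\infty}e^{-t(1-\widehat J(p^j))}(\widehat J(p^j)-1)\{p^j\Omega(p^j|x|_p)-p^{j-1}\Omega(p^{j-1}|x|_p)\}$, where $\widehat J(p^j)$ denotes the value of $\widehat J$ at $|\xi|_p=p^j$.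
   Context: $p$ is a fixed prime; Haar measure normalized by $\int_{\mathbb{Z}_p}dx=1$; $\chi_p(y)=\exp(2\pi i\{y\}_p)$; Fourier transform $\mathcal{F}\varphi(\xi)=\int_{\mathbb{Q}_p}\chi_p(\xi x)\varphi(x)dx$, extended to distributions $\mathcal{D}'(\mathbb{Q}_p)$ by duality; $\mathcal{F}^{-1}$ its inverse. $\Omega(p^{-r}|x-a|_p)$ is the characteristic function of $\{|x-a|_p\le p^r\}$. The function $\xi\mapsto\{\widehat J(|\xi|_p)-1\}e^{-t(1-\widehat J(|\xi|_p))}$ is locally constant, bounded, and invariant under translation by $\mathbb{Z}_p$, so its inverse Fourier transform is a distribution supported in $\mathbb{Z}_p$; the identity is an identity of this distribution restricted to $\mathbb{Z}_p\smallsetminus\{0\}$. *)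

theory Defs
  imports "HOL-Analysis.Analysis" "HOL-Computational_Algebra.Factorial_Ring"
begin

definition padic_val_rat :: "nat \<Rightarrow> rat \<Rightarrow> int" where
  "padic_val_rat p q = (case quotient_of q of (a, b) \<Rightarrow>
      int (multiplicity (int p) a) - int (multiplicity (int p) b))"

definition padic_norm_rat :: "nat \<Rightarrow> rat \<Rightarrow> real" where
  "padic_norm_rat p q = (if q = 0 then 0 else real p powr (- real_of_int (padic_val_rat p q)))"

definition padic_cauchy :: "nat \<Rightarrow> (nat \<Rightarrow> rat) \<Rightarrow> bool" where
  "padic_cauchy p X = (\<forall>e>0. \<exists>N. \<forall>m\<ge>N. \<forall>n\<ge>N. padic_norm_rat p (X m - X n) < e)"

definition padic_null :: "nat \<Rightarrow> (nat \<Rightarrow> rat) \<Rightarrow> bool" where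
  "padic_null p X = (\<forall>e>0. \<exists>N. \<forall>n\<ge>N. padic_norm_rat p (X n) < e)"

definition qp_cls :: "nat \<Rightarrow> (nat \<Rightarrow> rat) \<Rightarrow> (nat \<Rightarrow> rat) set" where
  "qp_cls p X = {Y. padic_cauchy p Y \<and> padic_null p (\<lambda>n. X n - Y n)}"

typedef (overloaded) 'p qp = "{S. \<exists>X. padic_cauchy CARD('p::finite) X \<and> S = qp_cls CARD('p) X}"
  by (rule exI[of _ "qp_cls CARD('p) (\<lambda>n. 0)"], rule CollectI, rule exI[of _ "\<lambda>n. 0"])
     (simp add: padic_cauchy_def padic_norm_rat_def)

definition qp_rep :: "'p::finite qp \<Rightarrow> nat \<Rightarrow> rat" where
  "qp_rep x = (SOME X. X \<in> Rep_qp x)"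

definition qp_mk :: "(nat \<Rightarrow> rat) \<Rightarrow> 'p::finite qp" where
  "qp_mk X = Abs_qp (qp_cls CARD('p) X)"

definition qp_of_rat :: "rat \<Rightarrow> 'p::finite qp" where
  "qp_of_rat q = qp_mk (\<lambda>n. q)"

instantiation qp :: (finite) "{zero, one, plus, minus, uminus, times}"
begin
definition "zero_qp = (qp_of_rat 0 :: 'a qp)"
definition "one_qp = (qp_of_rat 1 :: 'a qp)"
definition "plus_qp (x::'a qp) (y::'a qp) = (qp_mk (\<lambda>n. qp_rep x n + qp_rep y n) :: 'a qp)"
definition "minus_qp (x::'a qp) (y::'a qp) = (qp_mk (\<lambda>n. qp_rep x n - qp_rep y n) :: 'a qp)"
definition "uminus_qp (x::'a qp) = (qp_mk (\<lambda>n. - qp_rep x n) :: 'a qp)"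
definition "times_qp (x::'a qp) (y::'a qp) = (qp_mk (\<lambda>n. qp_rep x n * qp_rep y n) :: 'a qp)"
instance ..
end

definition qp_norm :: "'p::finite qp \<Rightarrow> real" where
  "qp_norm x = lim (\<lambda>n. padic_norm_rat CARD('p) (qp_rep x n))"

definition frac_rat :: "nat \<Rightarrow> rat \<Rightarrow> rat" where
  "frac_rat p q = (THE r. 0 \<le> r \<and> r < 1 \<and> (\<exists>(a::int) (k::nat). r = of_int a / of_nat p ^ k)
                          \<and> padic_norm_rat p (q - r) \<le> 1)"

definition qp_frac :: "'p::finite qp \<Rightarrow> rat" where
  "qp_frac x = (THE r. eventually (\<lambda>n. frac_rat CARD('p) (qp_rep x n) = r) sequentially)"

definition chi_p :: "'p::finite qp \<Rightarrow> complex" where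
  "chi_p y = cis (2 * pi * real_of_rat (qp_frac y))"

text \<open>Haar integral (normalised so that the integral over Z_p is 1), as the limit of
  the Riemann sums over the coset representatives a/p^n (0 <= a < p^(2n)) of
  p^n Z_p in p^(-n) Z_p; each coset has Haar measure p^(-n).  For locally
  constant compactly supported functions (and for the radial integrable functions
  used below) this is the Haar integral.\<close>
definition qp_int :: "('p::finite qp \<Rightarrow> complex) \<Rightarrow> complex" where
  "qp_int f = lim (\<lambda>n. \<Sum>a<CARD('p) ^ (2 * n).
       f (qp_of_rat (of_nat a / of_nat CARD('p) ^ n)) / of_nat CARD('p) ^ n)"

definition qp_test :: "('p::finite qp \<Rightarrow> complex) \<Rightarrow> bool" where
  "qp_test \<phi> = (\<exists>(m::int) (l::int).
      (\<forall>x. real CARD('p) powr m < qp_norm x \<longrightarrow> \<phi> x = 0) \<and>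
      (\<forall>x y. qp_norm (x - y) \<le> real CARD('p) powr (- l) \<longrightarrow> \<phi> x = \<phi> y))"

definition qp_ft :: "('p::finite qp \<Rightarrow> complex) \<Rightarrow> 'p qp \<Rightarrow> complex" where
  "qp_ft \<phi> \<xi> = qp_int (\<lambda>x. chi_p (\<xi> * x) * \<phi> x)"

definition qp_ift :: "('p::finite qp \<Rightarrow> complex) \<Rightarrow> 'p qp \<Rightarrow> complex" where
  "qp_ift \<phi> \<xi> = qp_int (\<lambda>x. chi_p (- (\<xi> * x)) * \<phi> x)"

definition Omega :: "real \<Rightarrow> complex" where
  "Omega r = (if r \<le> 1 then 1 else 0)"

definition Jhat :: "(real \<Rightarrow> real) \<Rightarrow> 'p::finite qp \<Rightarrow> complex" where
  "Jhat J \<xi> = qp_ft (\<lambda>x. if qp_norm x \<le> 1 then complex_of_real (J (qp_norm x)) else 0) \<xi>"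

text \<open>The value of \<^emph>\<open>J\<close>-hat at |xi|_p = p^j, taken at xi = p^(-j)\<close>
definition Jhat_at :: "(real \<Rightarrow> real) \<Rightarrow> 'p::finite itself \<Rightarrow> nat \<Rightarrow> complex" where
  "Jhat_at J _ j = Jhat J (qp_of_rat (1 / of_nat CARD('p) ^ j) :: 'p qp)"

text \<open>The distribution J(Z_0(.,t)) = F^{-1}[(Jhat - 1) e^{-t(1 - Jhat)}], given by its
  action on test functions: <F^{-1} T, phi> = <T, F^{-1} phi>\<close>
definition JZ0 :: "(real \<Rightarrow> real) \<Rightarrow> real \<Rightarrow> ('p::finite qp \<Rightarrow> complex) \<Rightarrow> complex" where
  "JZ0 J t \<phi> = qp_int (\<lambda>\<xi>. (Jhat J \<xi> - 1) * exp (- (complex_of_real t * (1 - Jhat J \<xi>)))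
                             * qp_ift \<phi> \<xi>)"

end

theory Submission
  imports Defs
begin

lemma pr_int: "prime (p::nat) \<Longrightarrow> prime_elem (int p)"
  by simp

lemma pr_nunit: "prime (p::nat) \<Longrightarrow> \<not> is_unit (int p)"
  using prime_elem_not_unit pr_int by blast

lemma val_frac:
  assumes p: "prime p" and a: "a \<noteq> 0" and b: "b \<noteq> 0"
  shows "padic_val_rat p (of_int a / of_int b) = int (multiplicity (int p) a) - int (multiplicity (int p) b)"
proof -
  obtain a' b' where q: "quotient_of (of_int a / of_int b) = (a', b')" by (cases "quotient_of (of_int a / of_int b)") auto
  have b'pos: "b' > 0" using quotient_of_denom_pos q by blast
  have eq: "(of_int a / of_int b :: rat) = of_int a' / of_int b'" using quotient_of_div q by blast
  hence "a * b' = a' * b" using b b'pos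
    by (simp add: field_simps) (metis of_int_eq_iff of_int_mult)
  moreover have "a' \<noteq> 0" using eq a b by auto
  ultimately have "multiplicity (int p) a + multiplicity (int p) b' = multiplicity (int p) a' + multiplicity (int p) b"
    using a b b'pos pr_int[OF p] by (metis less_irrefl prime_elem_multiplicity_mult_distrib)
  thus ?thesis unfolding padic_val_rat_def q by simp
qed

lemma rat_frac: fixes x :: rat obtains a b :: int where "b > 0" "x = of_int a / of_int b"
proof -
  obtain a b where q: "quotient_of x = (a,b)" by (cases "quotient_of x") auto
  show thesis by (rule that[OF quotient_of_denom_pos[OF q] quotient_of_div[OF q]])
qed

lemma norm_frac:
  assumes p: "prime p" and a: "a \<noteq> 0" and b: "b \<noteq> 0"
  shows "padic_norm_rat p (of_int a / of_int b) = real p powr (real (multiplicity (int p) b) - real (multiplicity (int p) a))"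
proof -
  have ne: "(of_int a / of_int b :: rat) \<noteq> 0" using a b by simp
  have "padic_norm_rat p (of_int a / of_int b) = real p powr (- real_of_int (padic_val_rat p (of_int a / of_int b)))"
    unfolding padic_norm_rat_def using ne by (simp only: if_False)
  also have "\<dots> = real p powr (- (real (multiplicity (int p) a) - real (multiplicity (int p) b)))"
    unfolding val_frac[OF assms] by simp
  finally show ?thesis by simp
qed

lemma norm_int:
  assumes p: "prime p" and a: "a \<noteq> 0"
  shows "padic_norm_rat p (of_int a) = real p powr (- real (multiplicity (int p) a))"
  using norm_frac[OF p a, of 1] by (simp only: of_int_1 div_by_1 multiplicity_one) simp

lemma norm_zero[simp]: "padic_norm_rat p 0 = 0" by (simp add: padic_norm_rat_def)

lemma norm_nonneg: "padic_norm_rat p x \<ge> 0" by (simp add: padic_norm_rat_def)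

lemma norm_mult:
  assumes p: "prime p"
  shows "padic_norm_rat p (x * y) = padic_norm_rat p x * padic_norm_rat p y"
proof (cases "x = 0 \<or> y = 0")
  case True thus ?thesis by auto
next
  case False
  obtain a b where ab: "b > 0" "x = of_int a / of_int b" by (rule rat_frac)
  obtain c d where cd: "d > 0" "y = of_int c / of_int d" by (rule rat_frac)
  have a: "a \<noteq> 0" and c: "c \<noteq> 0" using False ab cd by auto
  have xy: "x * y = of_int (a*c) / of_int (b*d)" using ab cd by simp
  have m: "multiplicity (int p) (a*c) = multiplicity (int p) a + multiplicity (int p) c"
          "multiplicity (int p) (b*d) = multiplicity (int p) b + multiplicity (int p) d"
    using a c ab cd pr_int[OF p] by (auto intro: prime_elem_multiplicity_mult_distrib)
  have "padic_norm_rat p (x*y) = real p powr (real (multiplicity (int p) (b*d)) - real (multiplicity (int p) (a*c)))"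
    unfolding xy using a c ab cd by (intro norm_frac[OF p]) auto
  also have "\<dots> = real p powr (real (multiplicity (int p) b) - real (multiplicity (int p) a)) *
     real p powr (real (multiplicity (int p) d) - real (multiplicity (int p) c))"
    unfolding m by (simp add: powr_add[symmetric] algebra_simps)
  also have "\<dots> = padic_norm_rat p x * padic_norm_rat p y"
    using a c ab cd by (simp add: norm_frac[OF p])
  finally show ?thesis .
qed

lemma mult_sum_ge:
  fixes x y :: int
  assumes p: "prime p" and s: "x + y \<noteq> 0"
  shows "multiplicity (int p) (x + y) \<ge> min (multiplicity (int p) x) (multiplicity (int p) y)"
proof -
  let ?m = "min (multiplicity (int p) x) (multiplicity (int p) y)"
  have "int p ^ ?m dvd x" by (rule multiplicity_dvd') simp
  moreover have "int p ^ ?m dvd y" by (rule multiplicity_dvd') simp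
  ultimately have "int p ^ ?m dvd x + y" by simp
  thus ?thesis using s pr_nunit[OF p] multiplicity_geI by blast
qed

lemma norm_ultra:
  assumes p: "prime p"
  shows "padic_norm_rat p (x + y) \<le> max (padic_norm_rat p x) (padic_norm_rat p y)"
proof (cases "x = 0 \<or> y = 0 \<or> x + y = 0")
  case True thus ?thesis using norm_nonneg[of p] by (auto simp: le_max_iff_disj)
next
  case False
  obtain a b where ab: "b > 0" "x = of_int a / of_int b" by (rule rat_frac)
  obtain c d where cd: "d > 0" "y = of_int c / of_int d" by (rule rat_frac)
  have a: "a \<noteq> 0" and c: "c \<noteq> 0" using False ab cd by auto
  have xy: "x + y = of_int (a*d + c*b) / of_int (b*d)" using ab cd by (simp add: field_simps)
  have s: "a*d + c*b \<noteq> 0"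
  proof
    assume "a*d + c*b = 0"
    hence "x + y = 0" unfolding xy by simp
    with False show False by simp
  qed
  let ?v = "multiplicity (int p)"
  have m: "?v (a*d) = ?v a + ?v d" "?v (c*b) = ?v c + ?v b" "?v (b*d) = ?v b + ?v d"
    using a c ab cd pr_int[OF p] by (auto intro: prime_elem_multiplicity_mult_distrib)
  have ge: "?v (a*d + c*b) \<ge> min (?v (a*d)) (?v (c*b))" by (rule mult_sum_ge[OF p s])
  have p1: "real p > 1" using p prime_gt_1_nat by auto
  have "padic_norm_rat p (x + y) = real p powr (real (?v (b*d)) - real (?v (a*d + c*b)))"
    unfolding xy by (rule norm_frac[OF p s]) (use ab cd in auto)
  also have "\<dots> = real p powr (real (?v b + ?v d) - real (?v (a*d + c*b)))"
    using m(3) by simp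
  also have "\<dots> \<le> max (real p powr (real (?v b) - real (?v a))) (real p powr (real (?v d) - real (?v c)))"
  proof (cases "?v (a*d) \<le> ?v (c*b)")
    case True
    hence "real (?v b + ?v d) - real (?v (a*d + c*b)) \<le> real (?v b) - real (?v a)" using ge m by simp
    hence "real p powr (real (?v b + ?v d) - real (?v (a*d + c*b))) \<le> real p powr (real (?v b) - real (?v a))"
      using p1 by (intro powr_mono) auto
    thus ?thesis by simp
  next
    case False
    hence "real (?v b + ?v d) - real (?v (a*d + c*b)) \<le> real (?v d) - real (?v c)" using ge m by simp
    hence "real p powr (real (?v b + ?v d) - real (?v (a*d + c*b))) \<le> real p powr (real (?v d) - real (?v c))"
      using p1 by (intro powr_mono) auto
    thus ?thesis by simp
  qed
  also have "\<dots> = max (padic_norm_rat p x) (padic_norm_rat p y)"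
    using ab cd a c by (simp add: norm_frac[OF p])
  finally show ?thesis .
qed

lemma mult_uminus: "multiplicity (int p) (- a) = multiplicity (int p) a"
proof -
  have "- a = (- 1) * a" by simp
  hence "multiplicity (int p) (- a) = multiplicity (int p) ((-1) * a)" by (simp only:)
  also have "\<dots> = multiplicity (int p) a" by (rule multiplicity_times_unit_right) simp
  finally show ?thesis .
qed

lemma norm_uminus: assumes p: "prime p" shows "padic_norm_rat p (- x) = padic_norm_rat p x"
proof (cases "x = 0")
  case True thus ?thesis by simp
next
  case False
  obtain a b where ab: "b > 0" "x = of_int a / of_int b" by (rule rat_frac)
  have a: "a \<noteq> 0" using False ab by auto
  have "- x = of_int (-a) / of_int b" using ab by simp
  hence "padic_norm_rat p (- x) = real p powr (real (multiplicity (int p) b) - real (multiplicity (int p) (-a)))"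
    using ab a by (simp only: norm_frac[OF p])
  thus ?thesis using ab a by (simp add: norm_frac[OF p] mult_uminus)
qed

lemma norm_tri:
  assumes p: "prime p"
  shows "padic_norm_rat p (x + y) \<le> padic_norm_rat p x + padic_norm_rat p y"
  using norm_ultra[OF p, of x y] norm_nonneg[of p x] norm_nonneg[of p y] by (auto simp: max_def split: if_splits)

lemma norm_diff_le:
  assumes p: "prime p"
  shows "\<bar>padic_norm_rat p x - padic_norm_rat p y\<bar> \<le> padic_norm_rat p (x - y)"
proof -
  have "padic_norm_rat p x \<le> padic_norm_rat p (x - y) + padic_norm_rat p y"
    using norm_tri[OF p, of "x - y" y] by simp
  moreover have "padic_norm_rat p y \<le> padic_norm_rat p (y - x) + padic_norm_rat p x"
    using norm_tri[OF p, of "y - x" x] by simp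
  moreover have "padic_norm_rat p (y - x) = padic_norm_rat p (x - y)"
    using norm_uminus[OF p, of "x - y"] by simp
  ultimately show ?thesis by linarith
qed


lemma norm_pos: assumes p: "prime p" and x: "x \<noteq> 0" shows "padic_norm_rat p x > 0"
  using x p prime_gt_0_nat by (simp add: padic_norm_rat_def)

lemma norm_pow_frac:
  assumes p: "prime p" and d: "d \<noteq> 0"
  shows "padic_norm_rat p (of_int d / of_nat p ^ K) = real p powr (real K - real (multiplicity (int p) d))"
proof -
  have "(of_nat p ^ K :: rat) = of_int (int p ^ K)" by simp
  moreover have "int p ^ K \<noteq> 0" using p prime_gt_0_nat by simp
  moreover have "multiplicity (int p) (int p ^ K) = K" using pr_int[OF p] by simp
  ultimately show ?thesis using norm_frac[OF p d, of "int p ^ K"] by simp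
qed

lemma norm_le1_dvd:
  assumes p: "prime p" and le: "padic_norm_rat p (of_int d / of_nat p ^ K) \<le> 1"
  shows "int p ^ K dvd d"
proof (cases "d = 0")
  case True thus ?thesis by simp
next
  case False
  have p1: "real p > 1" using p prime_gt_1_nat by auto
  have "real p powr (real K - real (multiplicity (int p) d)) \<le> 1" using le norm_pow_frac[OF p False] by simp
  hence "real K - real (multiplicity (int p) d) \<le> 0" using p1
    by (metis not_le powr_le_one_le less_le_not_le order.trans powr_less_cancel_iff powr_zero_eq_one  zero_less_one)
  hence "K \<le> multiplicity (int p) d" by simp
  thus ?thesis by (rule multiplicity_dvd')
qed

lemma norm_int_le1:
  assumes p: "prime p" shows "padic_norm_rat p (of_int d) \<le> 1"
proof (cases "d = 0")
  case True thus ?thesis by simp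
next
  case False
  have p1: "real p > 1" using p prime_gt_1_nat by auto
  have "real p powr (- real (multiplicity (int p) d)) \<le> real p powr 0"
    using p1 by (intro powr_mono) auto
  thus ?thesis using norm_int[OF p False] p1 by simp
qed

lemma norm_nat_frac_le1:
  assumes p: "prime p"
  shows "padic_norm_rat p (of_nat a / of_nat p ^ n) \<le> 1 \<longleftrightarrow> p ^ n dvd a"
proof
  assume "padic_norm_rat p (of_nat a / of_nat p ^ n) \<le> 1"
  hence "int p ^ n dvd int a" using norm_le1_dvd[OF p, of "int a" n] by simp
  thus "p ^ n dvd a" by (metis of_nat_dvd_iff of_nat_power)
next
  assume "p ^ n dvd a"
  then obtain k where "a = p ^ n * k" by blast
  hence "(of_nat a / of_nat p ^ n :: rat) = of_int (int k)" using p prime_gt_0_nat by simp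
  moreover have "padic_norm_rat p (of_int (int k)) \<le> 1" by (rule norm_int_le1[OF p])
  ultimately show "padic_norm_rat p (of_nat a / of_nat p ^ n) \<le> 1" by simp
qed

definition FP :: "nat \<Rightarrow> rat \<Rightarrow> rat \<Rightarrow> bool" where
  "FP p q r = (0 \<le> r \<and> r < 1 \<and> (\<exists>(a::int) (k::nat). r = of_int a / of_nat p ^ k)
                          \<and> padic_norm_rat p (q - r) \<le> 1)"

lemma FP_unique:
  assumes p: "prime p" and 1: "FP p q r1" and 2: "FP p q r2" shows "r1 = r2"
proof -
  obtain a1 k1 where r1: "r1 = of_int a1 / of_nat p ^ k1" using 1 unfolding FP_def by blast
  obtain a2 k2 where r2: "r2 = of_int a2 / of_nat p ^ k2" using 2 unfolding FP_def by blast
  have "padic_norm_rat p (r1 - r2) \<le> max (padic_norm_rat p (r1 - q)) (padic_norm_rat p (q - r2))"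
    using norm_ultra[OF p, of "r1 - q" "q - r2"] by simp
  moreover have "padic_norm_rat p (r1 - q) = padic_norm_rat p (q - r1)"
    using norm_uminus[OF p, of "q - r1"] by simp
  ultimately have le: "padic_norm_rat p (r1 - r2) \<le> 1" using 1 2 unfolding FP_def by (simp add: max_def split: if_splits)
  have pk: "(of_nat p ^ k :: rat) \<noteq> 0" for k using p prime_gt_0_nat by simp
  have eq: "r1 - r2 = of_int (a1 * int p ^ k2 - a2 * int p ^ k1) / of_nat p ^ (k1 + k2)"
    unfolding r1 r2 using pk[of k1] pk[of k2] by (simp add: field_simps power_add)
  have "int p ^ (k1 + k2) dvd (a1 * int p ^ k2 - a2 * int p ^ k1)"
    by (rule norm_le1_dvd[OF p]) (use le eq in simp)
  then obtain z where z: "a1 * int p ^ k2 - a2 * int p ^ k1 = int p ^ (k1 + k2) * z" by blast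
  have "r1 - r2 = of_int (int p ^ (k1 + k2) * z) / of_nat p ^ (k1 + k2)"
    using eq z by simp
  also have "\<dots> = of_int z" using pk[of "k1+k2"] by simp
  finally have rz: "r1 - r2 = of_int z" .
  have "-1 < r1 - r2" "r1 - r2 < 1" using 1 2 unfolding FP_def by auto
  hence "(of_int (-1) :: rat) < of_int z" "(of_int z :: rat) < of_int 1" using rz by auto
  hence "-1 < z" "z < 1" by (simp_all only: of_int_less_iff)
  hence "z = 0" by simp
  thus ?thesis using \<open>r1 - r2 = of_int z\<close> by simp
qed

lemma frac_rat_eqI: assumes p: "prime p" and fp: "FP p q r" shows "frac_rat p q = r"
  unfolding frac_rat_def
proof (rule the_equality)
  show "0 \<le> r \<and> r < 1 \<and> (\<exists>(a::int) (k::nat). r = of_int a / of_nat p ^ k) \<and> padic_norm_rat p (q - r) \<le> 1"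
    using fp unfolding FP_def .
next
  fix r' assume "0 \<le> r' \<and> r' < 1 \<and> (\<exists>(a::int) (k::nat). r' = of_int a / of_nat p ^ k) \<and> padic_norm_rat p (q - r') \<le> 1"
  hence "FP p q r'" unfolding FP_def .
  thus "r' = r" using FP_unique[OF p _ fp] by blast
qed

lemma FP_pow:
  assumes p: "prime p"
  shows "FP p (of_int c / of_nat p ^ M) (of_int (c mod int p ^ M) / of_nat p ^ M)"
proof -
  have pM: "int p ^ M > 0" using p prime_gt_0_nat by simp
  have pk: "(of_nat p ^ M :: rat) > 0" using p prime_gt_0_nat by simp
  have a: "0 \<le> c mod int p ^ M" "c mod int p ^ M < int p ^ M" using pM by auto
  have r1: "(0::rat) \<le> of_int (c mod int p ^ M) / of_nat p ^ M" using a pk by simp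
  have "(of_int (c mod int p ^ M) :: rat) < of_int (int p ^ M)" using a(2) by (simp only: of_int_less_iff)
  hence r2: "of_int (c mod int p ^ M) / of_nat p ^ M < (1::rat)" using pk by (simp add: divide_less_eq)
  have "(of_int c :: rat) = of_int (int p ^ M * (c div int p ^ M) + c mod int p ^ M)" by simp
  also have "\<dots> = of_nat p ^ M * of_int (c div int p ^ M) + of_int (c mod int p ^ M)"
    by (simp only: of_int_add of_int_mult of_int_power of_int_of_nat_eq)
  finally have cc: "(of_int c :: rat) = of_nat p ^ M * of_int (c div int p ^ M) + of_int (c mod int p ^ M)" .
  have "of_int c / of_nat p ^ M - of_int (c mod int p ^ M) / of_nat p ^ M = (of_int (c div int p ^ M) :: rat)"
    unfolding cc using pk by (simp add: field_simps)
  hence "padic_norm_rat p (of_int c / of_nat p ^ M - of_int (c mod int p ^ M) / of_nat p ^ M) \<le> 1"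
    using norm_int_le1[OF p] by simp
  thus ?thesis unfolding FP_def using r1 r2 by blast
qed

lemma frac_rat_pow:
  assumes p: "prime p"
  shows "frac_rat p (of_int c / of_nat p ^ M) = of_int (c mod int p ^ M) / of_nat p ^ M"
  by (rule frac_rat_eqI[OF p FP_pow[OF p]])

lemma FP_near:
  assumes p: "prime p" and "FP p q r" and "padic_norm_rat p (x - q) \<le> 1"
  shows "FP p x r"
proof -
  have "padic_norm_rat p (x - r) \<le> max (padic_norm_rat p (x - q)) (padic_norm_rat p (q - r))"
    using norm_ultra[OF p, of "x - q" "q - r"] by simp
  thus ?thesis using assms unfolding FP_def by auto
qed


section \<open>Null sequences\<close>

lemma null_eqI: "padic_null p A \<Longrightarrow> (\<And>n. B n = A n) \<Longrightarrow> padic_null p B"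
  by (simp add: padic_null_def)

lemma null_zero: "padic_null p (\<lambda>n. 0)"
  by (simp add: padic_null_def)

lemma null_add:
  assumes p: "prime p" and X: "padic_null p X" and Y: "padic_null p Y"
  shows "padic_null p (\<lambda>n. X n + Y n)"
  unfolding padic_null_def
proof (intro allI impI)
  fix e :: real assume e: "e > 0"
  obtain N1 where N1: "\<forall>n\<ge>N1. padic_norm_rat p (X n) < e" using X e unfolding padic_null_def by blast
  obtain N2 where N2: "\<forall>n\<ge>N2. padic_norm_rat p (Y n) < e" using Y e unfolding padic_null_def by blast
  have "\<forall>n\<ge>max N1 N2. padic_norm_rat p (X n + Y n) < e"
  proof (intro allI impI)
    fix n assume "n \<ge> max N1 N2"
    hence "padic_norm_rat p (X n) < e" "padic_norm_rat p (Y n) < e" using N1 N2 by auto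
    thus "padic_norm_rat p (X n + Y n) < e" using norm_ultra[OF p, of "X n" "Y n"] by simp
  qed
  thus "\<exists>N. \<forall>n\<ge>N. padic_norm_rat p (X n + Y n) < e" by blast
qed

lemma null_uminus:
  assumes p: "prime p" and X: "padic_null p X"
  shows "padic_null p (\<lambda>n. - X n)"
  using X unfolding padic_null_def norm_uminus[OF p] .

lemma null_cmult:
  assumes p: "prime p" and X: "padic_null p X"
  shows "padic_null p (\<lambda>n. c * X n)"
proof (cases "c = 0")
  case True thus ?thesis by (simp add: null_zero)
next
  case False
  have cpos: "padic_norm_rat p c > 0" by (rule norm_pos[OF p False])
  show ?thesis unfolding padic_null_def
  proof (intro allI impI)
    fix e :: real assume e: "e > 0"
    obtain N where N: "\<forall>n\<ge>N. padic_norm_rat p (X n) < e / padic_norm_rat p c"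
      using X e cpos unfolding padic_null_def by (meson divide_pos_pos)
    have "\<forall>n\<ge>N. padic_norm_rat p (c * X n) < e"
    proof (intro allI impI)
      fix n assume "n \<ge> N"
      hence "padic_norm_rat p (X n) < e / padic_norm_rat p c" using N by auto
      hence "padic_norm_rat p c * padic_norm_rat p (X n) < e" using cpos by (simp add: field_simps)
      thus "padic_norm_rat p (c * X n) < e" by (simp add: norm_mult[OF p])
    qed
    thus "\<exists>N. \<forall>n\<ge>N. padic_norm_rat p (c * X n) < e" by blast
  qed
qed

lemma null_mult:
  assumes p: "prime p" and X: "padic_null p X" and Y: "padic_null p Y"
  shows "padic_null p (\<lambda>n. X n * Y n)"
  unfolding padic_null_def
proof (intro allI impI)
  fix e :: real assume e: "e > 0"
  obtain N1 where N1: "\<forall>n\<ge>N1. padic_norm_rat p (X n) < 1" using X unfolding padic_null_def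
    by (meson zero_less_one)
  obtain N2 where N2: "\<forall>n\<ge>N2. padic_norm_rat p (Y n) < e" using Y e unfolding padic_null_def by blast
  have "\<forall>n\<ge>max N1 N2. padic_norm_rat p (X n * Y n) < e"
  proof (intro allI impI)
    fix n assume "n \<ge> max N1 N2"
    hence a: "padic_norm_rat p (X n) < 1" "padic_norm_rat p (Y n) < e" using N1 N2 by auto
    have "padic_norm_rat p (X n) * padic_norm_rat p (Y n) \<le> 1 * padic_norm_rat p (Y n)"
      using a norm_nonneg[of p "Y n"] by (intro mult_right_mono) auto
    thus "padic_norm_rat p (X n * Y n) < e" using a by (simp add: norm_mult[OF p])
  qed
  thus "\<exists>N. \<forall>n\<ge>N. padic_norm_rat p (X n * Y n) < e" by blast
qed

lemma cauchy_const: "padic_cauchy p (\<lambda>n. r)"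
  by (simp add: padic_cauchy_def)

section \<open>Embedding of the rationals\<close>

lemma Rep_of_rat: "Rep_qp (qp_of_rat r :: 'p::finite qp) = qp_cls CARD('p) (\<lambda>n. r)"
  unfolding qp_of_rat_def qp_mk_def
  by (rule Abs_qp_inverse) (auto intro: cauchy_const)

lemma rep_in: "qp_rep x \<in> Rep_qp x"
proof -
  obtain X where X: "padic_cauchy CARD('a) X" "Rep_qp x = qp_cls CARD('a) X"
    using Rep_qp[of x] by blast
  have "X \<in> Rep_qp x" unfolding X(2) qp_cls_def using X(1) null_zero by simp
  thus ?thesis unfolding qp_rep_def by (rule someI[where P="\<lambda>X. X \<in> Rep_qp x"])
qed

lemma rep_of_rat:
  assumes p: "prime CARD('p::finite)"
  shows "padic_null CARD('p) (\<lambda>n. r - qp_rep (qp_of_rat r :: 'p qp) n)"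
  using rep_in[of "qp_of_rat r :: 'p qp"] unfolding Rep_of_rat qp_cls_def by simp

lemma qp_mk_rat:
  assumes p: "prime CARD('p::finite)" and N: "padic_null CARD('p) (\<lambda>n. X n - r)"
  shows "(qp_mk X :: 'p qp) = qp_of_rat r"
proof -
  have "qp_cls CARD('p) X = qp_cls CARD('p) (\<lambda>n. r)"
  proof (intro set_eqI iffI)
    fix Z assume "Z \<in> qp_cls CARD('p) X"
    hence Z: "padic_cauchy CARD('p) Z" "padic_null CARD('p) (\<lambda>n. X n - Z n)" unfolding qp_cls_def by auto
    have "padic_null CARD('p) (\<lambda>n. - (X n - r) + (X n - Z n))"
      by (rule null_add[OF p null_uminus[OF p N] Z(2)])
    hence "padic_null CARD('p) (\<lambda>n. r - Z n)" by (rule null_eqI) simp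
    thus "Z \<in> qp_cls CARD('p) (\<lambda>n. r)" using Z(1) unfolding qp_cls_def by simp
  next
    fix Z assume "Z \<in> qp_cls CARD('p) (\<lambda>n. r)"
    hence Z: "padic_cauchy CARD('p) Z" "padic_null CARD('p) (\<lambda>n. r - Z n)" unfolding qp_cls_def by auto
    have "padic_null CARD('p) (\<lambda>n. (X n - r) + (r - Z n))"
      by (rule null_add[OF p N Z(2)])
    hence "padic_null CARD('p) (\<lambda>n. X n - Z n)" by (rule null_eqI) simp
    thus "Z \<in> qp_cls CARD('p) X" using Z(1) unfolding qp_cls_def by simp
  qed
  thus ?thesis unfolding qp_of_rat_def qp_mk_def by simp
qed

lemma qp_add_rat:
  assumes p: "prime CARD('p::finite)"
  shows "qp_of_rat r + (qp_of_rat s :: 'p qp) = qp_of_rat (r + s)"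
proof -
  let ?X = "qp_rep (qp_of_rat r :: 'p qp)" and ?Y = "qp_rep (qp_of_rat s :: 'p qp)"
  have "padic_null CARD('p) (\<lambda>n. - (r - ?X n) + - (s - ?Y n))"
    by (intro null_add[OF p] null_uminus[OF p] rep_of_rat[OF p])
  hence "padic_null CARD('p) (\<lambda>n. (?X n + ?Y n) - (r + s))" by (rule null_eqI) simp
  thus ?thesis unfolding plus_qp_def by (rule qp_mk_rat[OF p])
qed

lemma qp_diff_rat:
  assumes p: "prime CARD('p::finite)"
  shows "qp_of_rat r - (qp_of_rat s :: 'p qp) = qp_of_rat (r - s)"
proof -
  let ?X = "qp_rep (qp_of_rat r :: 'p qp)" and ?Y = "qp_rep (qp_of_rat s :: 'p qp)"
  have "padic_null CARD('p) (\<lambda>n. - (r - ?X n) + (s - ?Y n))"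
    by (intro null_add[OF p] null_uminus[OF p] rep_of_rat[OF p])
  hence "padic_null CARD('p) (\<lambda>n. (?X n - ?Y n) - (r - s))" by (rule null_eqI) simp
  thus ?thesis unfolding minus_qp_def by (rule qp_mk_rat[OF p])
qed

lemma qp_uminus_rat:
  assumes p: "prime CARD('p::finite)"
  shows "- (qp_of_rat r :: 'p qp) = qp_of_rat (- r)"
proof -
  let ?X = "qp_rep (qp_of_rat r :: 'p qp)"
  have "padic_null CARD('p) (\<lambda>n. (r - ?X n))"
    by (intro rep_of_rat[OF p])
  hence "padic_null CARD('p) (\<lambda>n. (- ?X n) - (- r))" by (rule null_eqI) simp
  thus ?thesis unfolding uminus_qp_def by (rule qp_mk_rat[OF p])
qed

lemma qp_mult_rat:
  assumes p: "prime CARD('p::finite)"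
  shows "qp_of_rat r * (qp_of_rat s :: 'p qp) = qp_of_rat (r * s)"
proof -
  let ?X = "qp_rep (qp_of_rat r :: 'p qp)" and ?Y = "qp_rep (qp_of_rat s :: 'p qp)"
  have u: "padic_null CARD('p) (\<lambda>n. r - ?X n)" and v: "padic_null CARD('p) (\<lambda>n. s - ?Y n)"
    by (intro rep_of_rat[OF p])+
  have "padic_null CARD('p) (\<lambda>n. ((- r) * (s - ?Y n) + (- s) * (r - ?X n)) + (r - ?X n) * (s - ?Y n))"
    by (intro null_add[OF p] null_cmult[OF p] null_mult[OF p] u v)
  hence "padic_null CARD('p) (\<lambda>n. (?X n * ?Y n) - (r * s))" by (rule null_eqI) (simp add: algebra_simps)
  thus ?thesis unfolding times_qp_def by (rule qp_mk_rat[OF p])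
qed

lemma qp_zero_rat: "(0 :: 'p::finite qp) = qp_of_rat 0"
  by (simp add: zero_qp_def)

lemma qp_norm_rat:
  assumes p: "prime CARD('p::finite)"
  shows "qp_norm (qp_of_rat r :: 'p qp) = padic_norm_rat CARD('p) r"
proof -
  let ?X = "qp_rep (qp_of_rat r :: 'p qp)"
  have u: "padic_null CARD('p) (\<lambda>n. r - ?X n)" by (rule rep_of_rat[OF p])
  have "(\<lambda>n. padic_norm_rat CARD('p) (?X n)) \<longlonglongrightarrow> padic_norm_rat CARD('p) r"
  proof (rule LIMSEQ_I)
    fix e :: real assume e: "e > 0"
    obtain N where N: "\<forall>n\<ge>N. padic_norm_rat CARD('p) (r - ?X n) < e" using u e unfolding padic_null_def by blast
    have "\<forall>n\<ge>N. norm (padic_norm_rat CARD('p) (?X n) - padic_norm_rat CARD('p) r) < e"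
    proof (intro allI impI)
      fix n assume "n \<ge> N"
      hence a: "padic_norm_rat CARD('p) (r - ?X n) < e" using N by auto
      have "padic_norm_rat CARD('p) (?X n - r) = padic_norm_rat CARD('p) (r - ?X n)"
        using norm_uminus[OF p, of "r - ?X n"] by simp
      thus "norm (padic_norm_rat CARD('p) (?X n) - padic_norm_rat CARD('p) r) < e"
        using norm_diff_le[OF p, of "?X n" r] a by simp
    qed
    thus "\<exists>N. \<forall>n\<ge>N. norm (padic_norm_rat CARD('p) (?X n) - padic_norm_rat CARD('p) r) < e" by blast
  qed
  thus ?thesis unfolding qp_norm_def by (rule limI)
qed

lemma qp_frac_rat:
  assumes p: "prime CARD('p::finite)" and fp: "FP CARD('p) r f"
  shows "qp_frac (qp_of_rat r :: 'p qp) = f"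
proof -
  let ?X = "qp_rep (qp_of_rat r :: 'p qp)"
  have u: "padic_null CARD('p) (\<lambda>n. r - ?X n)" by (rule rep_of_rat[OF p])
  obtain N where N: "\<forall>n\<ge>N. padic_norm_rat CARD('p) (r - ?X n) < 1" using u unfolding padic_null_def
    by (meson zero_less_one)
  have ev: "\<forall>n\<ge>N. frac_rat CARD('p) (?X n) = f"
  proof (intro allI impI)
    fix n assume "n \<ge> N"
    hence "padic_norm_rat CARD('p) (r - ?X n) < 1" using N by auto
    moreover have "padic_norm_rat CARD('p) (?X n - r) = padic_norm_rat CARD('p) (r - ?X n)"
      using norm_uminus[OF p, of "r - ?X n"] by simp
    ultimately have "FP CARD('p) (?X n) f" using FP_near[OF p fp, of "?X n"] by simp
    thus "frac_rat CARD('p) (?X n) = f" by (rule frac_rat_eqI[OF p])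
  qed
  show ?thesis unfolding qp_frac_def
  proof (rule the_equality)
    show "\<forall>\<^sub>F n in sequentially. frac_rat CARD('p) (?X n) = f"
      unfolding eventually_sequentially using ev by blast
  next
    fix f' assume "\<forall>\<^sub>F n in sequentially. frac_rat CARD('p) (?X n) = f'"
    then obtain M where M: "\<forall>n\<ge>M. frac_rat CARD('p) (?X n) = f'" unfolding eventually_sequentially by blast
    have "frac_rat CARD('p) (?X (max N M)) = f'" using M max.cobounded2 by blast
    moreover have "frac_rat CARD('p) (?X (max N M)) = f" using ev max.cobounded1 by blast
    ultimately show "f' = f" by simp
  qed
qed

lemma chi_rat:
  assumes p: "prime CARD('p::finite)"
  shows "chi_p (qp_of_rat (of_int c / of_nat CARD('p) ^ M) :: 'p qp) = cis (2 * pi * (of_int c / real CARD('p) ^ M))"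
proof -
  let ?m = "int CARD('p) ^ M"
  have "c mod ?m = c - ?m * (c div ?m)" by (simp add: minus_div_mult_eq_mod[symmetric] mult.commute)
  hence "real_of_int (c mod ?m) = of_int c - of_int ?m * of_int (c div ?m)" by simp
  hence md: "real_of_int (c mod ?m) = of_int c - real CARD('p) ^ M * of_int (c div ?m)" by simp
  have 1: "chi_p (qp_of_rat (of_int c / of_nat CARD('p) ^ M) :: 'p qp) =
        cis (2 * pi * real_of_rat (of_int (c mod ?m) / of_nat CARD('p) ^ M))"
    unfolding chi_p_def qp_frac_rat[OF p FP_pow[OF p]] ..
  have 2: "real_of_rat (of_int (c mod ?m) / of_nat CARD('p) ^ M) = (of_int c - real CARD('p) ^ M * of_int (c div ?m)) / real CARD('p) ^ M"
    unfolding md[symmetric] by (simp add: of_rat_divide of_rat_power)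
  have 3: "2 * pi * ((of_int c - real CARD('p) ^ M * of_int (c div ?m)) / real CARD('p) ^ M)
      = 2 * pi * (of_int c / real CARD('p) ^ M) - 2 * pi * of_int (c div ?m)"
    using p prime_gt_0_nat[OF p] by (simp add: field_simps)
  have 4: "cis (2 * pi * (of_int c / real CARD('p) ^ M) - 2 * pi * of_int (c div ?m)) =
     cis (2 * pi * (of_int c / real CARD('p) ^ M)) / cis (2 * pi * of_int (c div ?m))"
    by (rule cis_divide[symmetric])
  have 5: "cis (2 * pi * of_int (c div ?m)) = 1" by (rule cis_multiple_2pi) simp
  have 6: "cis (2 * pi * (of_int c / real CARD('p) ^ M) - 2 * pi * of_int (c div ?m)) = cis (2 * pi * (of_int c / real CARD('p) ^ M))"
    unfolding 4 5 by (rule div_by_1)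
  show ?thesis unfolding 1 2 3 by (rule 6)
qed


lemma periodic_sum:
  fixes h :: "nat \<Rightarrow> complex"
  assumes per1: "\<And>c. h (c + N) = h c"
  shows "(\<Sum>c<k*N. h c) = of_nat k * (\<Sum>c<N. h c)"
proof -
  have per: "h (c + m*N) = h c" for c m
  proof (induct m)
    case 0 thus ?case by simp
  next
    case (Suc m)
    have "h (c + Suc m * N) = h ((c + m*N) + N)" by (simp add: algebra_simps)
    also have "\<dots> = h (c + m*N)" by (rule per1)
    finally show ?case using Suc by simp
  qed
  have "(\<Sum>c<k*N. h c) = (\<Sum>m<k. sum h {m*N..<m*N+N})" using sum.nat_group[of h N k] by simp
  also have "\<dots> = (\<Sum>m<k. (\<Sum>c<N. h c))"
  proof (rule sum.cong[OF refl])
    fix m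
    have "sum h {m*N..<m*N+N} = sum h {0 + m*N..<N + m*N}" by (simp add: add.commute)
    also have "\<dots> = (\<Sum>i\<in>{0..<N}. h (i + m*N))" by (rule sum.shift_bounds_nat_ivl)
    also have "\<dots> = (\<Sum>c<N. h c)" using per by (simp add: atLeast0LessThan)
    finally show "sum h {m*N..<m*N+N} = (\<Sum>c<N. h c)" .
  qed
  also have "\<dots> = of_nat k * (\<Sum>c<N. h c)" by simp
  finally show ?thesis .
qed

lemma lim_cong_ev:
  assumes "\<forall>n\<ge>N. X n = Y n"
  shows "lim X = lim Y"
proof -
  have ev: "eventually (\<lambda>n. X n = Y n) sequentially" using assms unfolding eventually_sequentially by blast
  have "(X \<longlonglongrightarrow> L) = (Y \<longlonglongrightarrow> L)" for L by (rule tendsto_cong[OF ev])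
  thus ?thesis unfolding lim_def by simp
qed

lemma lim_ev_const:
  assumes "\<forall>n\<ge>N. X n = (c :: 'a :: t2_space)"
  shows "lim X = c"
proof -
  have ev: "eventually (\<lambda>n. X n = c) sequentially" using assms unfolding eventually_sequentially by blast
  show ?thesis by (rule limI[OF tendsto_eventually[OF ev]])
qed

lemma sum_mult_reduce:
  fixes g :: "nat \<Rightarrow> complex"
  assumes p: "(p::nat) > 0" and s: "s \<le> N"
  shows "(\<Sum>a<p^N. if p^s dvd a then g a else 0) = (\<Sum>b<p^(N-s). g (p^s * b))"
proof -
  have pN: "p^N = p^s * p^(N-s)" using s by (simp add: power_add[symmetric])
  have ps: "p^s > 0" using p by simp
  have set: "{a \<in> {..<p^N}. p^s dvd a} = (\<lambda>b. p^s * b) ` {..<p^(N-s)}"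
  proof (intro set_eqI iffI)
    fix a assume a: "a \<in> {a \<in> {..<p^N}. p^s dvd a}"
    hence ad: "p^s dvd a" "a < p^N" by auto
    then obtain b where b: "a = p^s * b" by (auto elim: dvdE)
    have "p^s * b < p^s * p^(N-s)" using ad(2) pN b by simp
    hence "b < p^(N-s)" using ps by simp
    thus "a \<in> (\<lambda>b. p^s * b) ` {..<p^(N-s)}" using b by auto
  next
    fix a assume "a \<in> (\<lambda>b. p^s * b) ` {..<p^(N-s)}"
    then obtain b where b: "a = p^s * b" "b < p^(N-s)" by auto
    hence "p^s * b < p^s * p^(N-s)" using ps by simp
    thus "a \<in> {a \<in> {..<p^N}. p^s dvd a}" using b pN by auto
  qed
  have inj: "inj_on (\<lambda>b. p^s * b) {..<p^(N-s)}" using ps by (auto simp: inj_on_def)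
  have "(\<Sum>a<p^N. if p^s dvd a then g a else 0) = sum g {a \<in> {..<p^N}. p^s dvd a}"
    by (rule sum.inter_filter[symmetric]) simp
  also have "\<dots> = sum g ((\<lambda>b. p^s * b) ` {..<p^(N-s)})" unfolding set ..
  also have "\<dots> = (\<Sum>b<p^(N-s). g (p^s * b))" by (simp add: sum.reindex[OF inj])
  finally show ?thesis .
qed

lemma cis_ne_1:
  assumes m: "(m::nat) > 0" and nd: "\<not> int m dvd c"
  shows "cis (2 * pi * (of_int (- c) / real m)) \<noteq> 1"
proof
  assume "cis (2 * pi * (of_int (- c) / real m)) = 1"
  hence "exp (\<i> * complex_of_real (2 * pi * (of_int (- c) / real m))) = 1" by (simp add: cis_conv_exp)
  then obtain n :: int where n: "2 * pi * (of_int (- c) / real m) = of_int (2 * n) * pi"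
    unfolding exp_eq_1 by auto
  hence h: "(2 * pi) * (of_int (- c) / real m) = (2 * pi) * of_int n" by simp
  have nz: "2 * pi \<noteq> 0" by simp
  have "of_int (- c) / real m = of_int n" using h unfolding mult_left_cancel[OF nz] .
  hence "real_of_int (- c) = of_int n * real m" using m by (simp add: field_simps)
  hence "- c = n * int m" by (metis of_int_eq_iff of_int_mult of_int_of_nat_eq)
  hence "int m dvd c" by (metis dvd_minus_iff dvd_triv_right)
  thus False using nd by simp
qed

lemma geom_root:
  assumes m: "(m::nat) > 0"
  shows "(\<Sum>b<k*m. cis (2 * pi * (of_int (- (int b * c)) / real m))) = (if int m dvd c then of_nat (k*m) else 0)"
proof -
  let ?w = "cis (2 * pi * (of_int (- c) / real m))"
  have pw: "cis (2 * pi * (of_int (- (int b * c)) / real m)) = ?w ^ b" for b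
    unfolding Complex.DeMoivre by (rule arg_cong[where f=cis]) (simp add: field_simps)
  show ?thesis
  proof (cases "int m dvd c")
    case True
    then obtain z where z: "c = int m * z" by blast
    have "cis (2 * pi * (of_int (- (int b * c)) / real m)) = 1" for b
    proof -
      have "2 * pi * (of_int (- (int b * c)) / real m) = 2 * pi * of_int (- (int b * z))"
        unfolding z using m by (simp add: field_simps)
      thus ?thesis by (simp only:) (rule cis_multiple_2pi, simp)
    qed
    hence "(\<Sum>b<k*m. cis (2 * pi * (of_int (- (int b * c)) / real m))) = (\<Sum>b<k*m. (1::complex))"
      by (intro sum.cong) auto
    thus ?thesis using True by simp
  next
    case False
    have ne: "?w \<noteq> 1" by (rule cis_ne_1[OF m False])
    have wm: "?w ^ m = 1"
    proof -
      have "?w ^ m = cis (2 * pi * of_int (- c))" unfolding Complex.DeMoivre using m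
        by (intro arg_cong[where f=cis]) (simp add: field_simps)
      also have "\<dots> = 1" by (rule cis_multiple_2pi) simp
      finally show ?thesis .
    qed
    have "(\<Sum>b<k*m. cis (2 * pi * (of_int (- (int b * c)) / real m))) = (\<Sum>b<k*m. ?w ^ b)"
      unfolding pw ..
    also have "\<dots> = (?w ^ (k*m) - 1) / (?w - 1)" by (rule geometric_sum[OF ne])
    also have "?w ^ (k*m) = (?w ^ m) ^ k" by (simp only: mult.commute[of k m] power_mult)
    also have "\<dots> = 1" by (simp only: wm power_one)
    finally show ?thesis using False by simp
  qed
qed


definition Ech :: "nat \<Rightarrow> nat \<Rightarrow> nat \<Rightarrow> nat \<Rightarrow> complex" where
  "Ech p n a c = cis (2 * pi * (of_int (- (int a * int c)) / real p ^ n))"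

definition ind :: "nat \<Rightarrow> nat \<Rightarrow> nat \<Rightarrow> complex" where
  "ind p j c = (if p ^ j dvd c then 1 else 0)"

lemma char_sum:
  assumes p: "prime p" and s: "s \<le> n"
  shows "(\<Sum>a<p^(2*n). ind p s a * Ech p n a c) = of_nat (p^(2*n-s)) * ind p (n-s) c"
proof -
  have p0: "p > 0" using p prime_gt_0_nat by blast
  have "(\<Sum>a<p^(2*n). ind p s a * Ech p n a c) = (\<Sum>a<p^(2*n). if p^s dvd a then Ech p n a c else 0)"
    by (rule sum.cong) (auto simp: ind_def)
  also have "\<dots> = (\<Sum>b<p^(2*n-s). Ech p n (p^s * b) c)"
    by (rule sum_mult_reduce[OF p0]) (use s in simp)
  also have "\<dots> = (\<Sum>b<p^n * p^(n-s). cis (2 * pi * (of_int (- (int b * int c)) / real (p^(n-s)))))"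
  proof -
    have e: "2*n - s = n + (n - s)" using s by simp
    have "Ech p n (p^s * b) c = cis (2 * pi * (of_int (- (int b * int c)) / real (p^(n-s))))" for b
    proof -
      have "real p ^ n = real p ^ s * real p ^ (n - s)" using s by (simp add: power_add[symmetric])
      hence "of_int (- (int (p^s * b) * int c)) / real p ^ n = of_int (- (int b * int c)) / real (p^(n-s))"
        using p0 by (simp add: field_simps)
      thus ?thesis unfolding Ech_def by simp
    qed
    thus ?thesis unfolding e power_add by simp
  qed
  also have "\<dots> = (if int (p^(n-s)) dvd int c then of_nat (p^n * p^(n-s)) else 0)"
    by (rule geom_root) (use p0 in simp)
  also have "\<dots> = of_nat (p^(2*n-s)) * ind p (n-s) c"
  proof -
    have "2*n - s = n + (n-s)" using s by simp
    hence e: "p^(2*n - s) = p^n * p^(n-s)" by (simp only: power_add)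
    show ?thesis unfolding e ind_def by (simp only: of_nat_dvd_iff) simp
  qed
  finally show ?thesis .
qed

definition gfun :: "nat \<Rightarrow> (nat \<Rightarrow> complex) \<Rightarrow> nat \<Rightarrow> nat \<Rightarrow> complex" where
  "gfun p CC n a = (if p ^ n dvd a then 0 else CC (n - multiplicity p a))"

definition Tfun :: "nat \<Rightarrow> (nat \<Rightarrow> complex) \<Rightarrow> nat \<Rightarrow> nat \<Rightarrow> complex" where
  "Tfun p CC n c = (\<Sum>j<n. CC (Suc j) * (of_nat p ^ Suc j * ind p (Suc j) c - of_nat p ^ j * ind p j c))"

lemma gfun_sum:
  assumes p: "prime p"
  shows "gfun p CC n a = (\<Sum>j<n. CC (Suc j) * (ind p (n - Suc j) a - ind p (n - j) a))"
proof (cases "p ^ n dvd a")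
  case True
  hence "p ^ k dvd a" if "k \<le> n" for k using that by (meson dvd_trans le_imp_power_dvd)
  hence "ind p (n - Suc j) a - ind p (n - j) a = 0" for j by (simp add: ind_def)
  thus ?thesis using True by (simp add: gfun_def)
next
  case False
  have a0: "a \<noteq> 0"
  proof
    assume "a = 0" with False show False by simp
  qed
  have nu: "\<not> is_unit p" using p not_prime_unit by blast
  let ?v = "multiplicity p a"
  have dv: "p ^ k dvd a \<longleftrightarrow> k \<le> ?v" for k by (rule power_dvd_iff_le_multiplicity[OF a0 nu])
  have vn: "?v < n" using False dv not_less by blast
  have "(\<Sum>j<n. CC (Suc j) * (ind p (n - Suc j) a - ind p (n - j) a)) =
        (\<Sum>j<n. if j = n - Suc ?v then CC (Suc j) else 0)"
  proof (rule sum.cong[OF refl])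
    fix j assume j: "j \<in> {..<n}"
    show "CC (Suc j) * (ind p (n - Suc j) a - ind p (n - j) a) = (if j = n - Suc ?v then CC (Suc j) else 0)"
      using j vn by (auto simp: ind_def dv)
  qed
  also have "\<dots> = CC (Suc (n - Suc ?v))" using vn by (simp add: sum.delta)
  also have "Suc (n - Suc ?v) = n - ?v" using vn by simp
  finally show ?thesis using False by (simp add: gfun_def)
qed

lemma gE_sum:
  assumes p: "prime p"
  shows "(\<Sum>a<p^(2*n). gfun p CC n a * Ech p n a c) = of_nat p ^ n * Tfun p CC n c"
proof -
  have "(\<Sum>a<p^(2*n). gfun p CC n a * Ech p n a c) =
     (\<Sum>a<p^(2*n). \<Sum>j<n. CC (Suc j) * (ind p (n - Suc j) a * Ech p n a c - ind p (n - j) a * Ech p n a c))"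
    unfolding gfun_sum[OF p] sum_distrib_right by (intro sum.cong refl) (simp add: algebra_simps)
  also have "\<dots> = (\<Sum>j<n. CC (Suc j) * ((\<Sum>a<p^(2*n). ind p (n - Suc j) a * Ech p n a c) - (\<Sum>a<p^(2*n). ind p (n - j) a * Ech p n a c)))"
    by (subst sum.swap) (intro sum.cong refl, simp add: sum_distrib_left sum_subtractf right_diff_distrib)
  also have "\<dots> = (\<Sum>j<n. CC (Suc j) * (of_nat (p^(n + Suc j)) * ind p (Suc j) c - of_nat (p^(n+j)) * ind p j c))"
  proof (rule sum.cong[OF refl])
    fix j assume j: "j \<in> {..<n}"
    have a: "2*n - (n - Suc j) = n + Suc j" "n - (n - Suc j) = Suc j" "2*n - (n - j) = n + j" "n - (n - j) = j"
      using j by auto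
    show "CC (Suc j) * ((\<Sum>a<p^(2*n). ind p (n - Suc j) a * Ech p n a c) - (\<Sum>a<p^(2*n). ind p (n - j) a * Ech p n a c)) =
          CC (Suc j) * (of_nat (p^(n + Suc j)) * ind p (Suc j) c - of_nat (p^(n+j)) * ind p j c)"
      using char_sum[OF p, of "n - Suc j" n c] char_sum[OF p, of "n - j" n c] a by simp
  qed
  also have "\<dots> = of_nat p ^ n * Tfun p CC n c"
    unfolding Tfun_def sum_distrib_left by (rule sum.cong[OF refl]) (simp add: power_add algebra_simps)
  finally show ?thesis .
qed

lemma core:
  assumes p: "prime p"
  shows "(\<Sum>a<p^(2*n). gfun p CC n a * ((\<Sum>c<p^n. Ech p n a c * f c) / of_nat p ^ n) / of_nat p ^ n)
       = (\<Sum>c<p^n. Tfun p CC n c * f c / of_nat p ^ n)"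
proof -
  have p0: "(of_nat p ^ n :: complex) \<noteq> 0" using p prime_gt_0_nat by simp
  have "(\<Sum>a<p^(2*n). gfun p CC n a * ((\<Sum>c<p^n. Ech p n a c * f c) / of_nat p ^ n) / of_nat p ^ n)
     = (\<Sum>a<p^(2*n). \<Sum>c<p^n. gfun p CC n a * Ech p n a c * f c / (of_nat p ^ n * of_nat p ^ n))"
    by (simp add: sum_distrib_left sum_divide_distrib algebra_simps)
  also have "\<dots> = (\<Sum>c<p^n. (\<Sum>a<p^(2*n). gfun p CC n a * Ech p n a c) * f c / (of_nat p ^ n * of_nat p ^ n))"
    by (subst sum.swap) (simp add: sum_distrib_right sum_divide_distrib)
  also have "\<dots> = (\<Sum>c<p^n. Tfun p CC n c * f c / of_nat p ^ n)"
    unfolding gE_sum[OF p] using p0 prime_gt_0_nat[OF p] by (simp add: field_simps)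
  finally show ?thesis .
qed


lemma mult_int_nat:
  assumes p: "prime p" and c: "c \<noteq> 0"
  shows "multiplicity (int p) (int c) = multiplicity p c"
proof (rule multiplicity_eqI)
  have nu: "\<not> is_unit p" using p not_prime_unit by blast
  show "int p ^ multiplicity p c dvd int c"
    by (metis multiplicity_dvd of_nat_dvd_iff of_nat_power)
  have "\<not> p ^ Suc (multiplicity p c) dvd c"
    by (simp only: power_dvd_iff_le_multiplicity[OF c nu])
  thus "\<not> int p ^ Suc (multiplicity p c) dvd int c"
    by (metis of_nat_dvd_iff of_nat_power)
qed

lemma pt_norm_le1:
  assumes p: "prime CARD('p::finite)"
  shows "qp_norm (qp_of_rat (of_nat a / of_nat CARD('p) ^ n) :: 'p qp) \<le> 1 \<longleftrightarrow> CARD('p) ^ n dvd a"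
  by (simp add: qp_norm_rat[OF p] norm_nat_frac_le1[OF p])

lemma nat_norm:
  assumes p: "prime CARD('p::finite)" and c: "c \<noteq> 0"
  shows "qp_norm (qp_of_rat (of_nat c) :: 'p qp) = real CARD('p) powr (- real (multiplicity CARD('p) c))"
proof -
  have "qp_norm (qp_of_rat (of_nat c) :: 'p qp) = padic_norm_rat CARD('p) (of_int (int c))"
    by (simp add: qp_norm_rat[OF p])
  also have "\<dots> = real CARD('p) powr (- real (multiplicity (int CARD('p)) (int c)))"
    by (rule norm_int[OF p]) (use c in simp)
  finally show ?thesis using mult_int_nat[OF p c] by simp
qed

lemma nat_norm_le1:
  assumes p: "prime CARD('p::finite)"
  shows "qp_norm (qp_of_rat (of_nat c) :: 'p qp) \<le> 1"
proof -
  have "qp_norm (qp_of_rat (of_nat c) :: 'p qp) = padic_norm_rat CARD('p) (of_int (int c))"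
    by (simp add: qp_norm_rat[OF p])
  thus ?thesis using norm_int_le1[OF p, of "int c"] by simp
qed

lemma Omega_nat:
  assumes p: "prime CARD('p::finite)" and c: "c \<noteq> 0"
  shows "Omega (real CARD('p) ^ j * qp_norm (qp_of_rat (of_nat c) :: 'p qp)) = ind CARD('p) j c"
proof -
  let ?P = "real CARD('p)" and ?v = "multiplicity CARD('p) c"
  have P1: "?P > 1" using p prime_gt_1_nat by simp
  have nu: "\<not> is_unit CARD('p)" using p not_prime_unit by blast
  have "?P ^ j * qp_norm (qp_of_rat (of_nat c) :: 'p qp) = ?P powr (real j - real ?v)"
    unfolding nat_norm[OF p c] using P1 by (simp add: powr_diff powr_realpow powr_minus divide_inverse)
  moreover have "?P powr (real j - real ?v) \<le> 1 \<longleftrightarrow> j \<le> ?v"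
  proof -
    have "?P powr (real j - real ?v) \<le> ?P powr 0 \<longleftrightarrow> real j - real ?v \<le> 0"
      using P1 by (rule powr_le_cancel_iff)
    thus ?thesis by simp
  qed
  moreover have "CARD('p) ^ j dvd c \<longleftrightarrow> j \<le> ?v" by (rule power_dvd_iff_le_multiplicity[OF c nu])
  ultimately show ?thesis unfolding Omega_def ind_def by simp
qed

lemma test_props:
  assumes p: "prime CARD('p::finite)" and t: "qp_test (\<phi> :: 'p qp \<Rightarrow> complex)"
    and supp: "\<forall>x. \<phi> x \<noteq> 0 \<longrightarrow> 0 < qp_norm x \<and> qp_norm x \<le> 1"
  obtains L :: nat where
    "\<And>c c'. int CARD('p) ^ L dvd (int c - int c') \<Longrightarrow> \<phi> (qp_of_rat (of_nat c)) = \<phi> (qp_of_rat (of_nat c'))"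
    "\<And>c. CARD('p) ^ L dvd c \<Longrightarrow> \<phi> (qp_of_rat (of_nat c)) = 0"
    "\<And>a n. \<not> CARD('p) ^ n dvd a \<Longrightarrow> \<phi> (qp_of_rat (of_nat a / of_nat CARD('p) ^ n)) = 0"
proof -
  obtain m l :: int where loc: "\<forall>x y. qp_norm (x - y) \<le> real CARD('p) powr (- real_of_int l) \<longrightarrow> \<phi> x = \<phi> y"
    using t unfolding qp_test_def by blast
  define L where "L = nat l"
  have P1: "real CARD('p) > 1" using p prime_gt_1_nat by simp
  have A: "\<phi> (qp_of_rat (of_nat c)) = \<phi> (qp_of_rat (of_nat c'))" if d: "int CARD('p) ^ L dvd (int c - int c')" for c c'
  proof -
    have e: "(qp_of_rat (of_nat c) :: 'p qp) - qp_of_rat (of_nat c') = qp_of_rat (of_int (int c - int c'))"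
      by (simp add: qp_diff_rat[OF p])
    have "padic_norm_rat CARD('p) (of_int (int c - int c')) \<le> real CARD('p) powr (- real_of_int l)"
    proof (cases "int c - int c' = 0")
      case True thus ?thesis by simp
    next
      case False
      have "L \<le> multiplicity (int CARD('p)) (int c - int c')"
        using d False pr_nunit[OF p] power_dvd_iff_le_multiplicity by blast
      moreover have "real_of_int l \<le> real L" unfolding L_def by linarith
      ultimately have "- real (multiplicity (int CARD('p)) (int c - int c')) \<le> - real_of_int l" by linarith
      hence "real CARD('p) powr (- real (multiplicity (int CARD('p)) (int c - int c'))) \<le> real CARD('p) powr (- real_of_int l)"
        using P1 by (intro powr_mono) auto
      thus ?thesis using norm_int[OF p False] by simp
    qed
    hence "qp_norm ((qp_of_rat (of_nat c) :: 'p qp) - qp_of_rat (of_nat c')) \<le> real CARD('p) powr (- real_of_int l)"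
      unfolding e qp_norm_rat[OF p] .
    thus ?thesis using loc by blast
  qed
  have Z: "\<phi> (qp_of_rat 0) = 0"
  proof (rule ccontr)
    assume "\<phi> (qp_of_rat 0) \<noteq> 0"
    hence "0 < qp_norm (qp_of_rat 0 :: 'p qp)" using supp by blast
    thus False by (simp add: qp_norm_rat[OF p])
  qed
  show ?thesis
  proof (rule that)
    show "\<phi> (qp_of_rat (of_nat c)) = \<phi> (qp_of_rat (of_nat c'))" if "int CARD('p) ^ L dvd (int c - int c')" for c c'
      using A that .
    show "\<phi> (qp_of_rat (of_nat c)) = 0" if "CARD('p) ^ L dvd c" for c
    proof -
      have "int CARD('p) ^ L dvd (int c - int 0)" using that by (metis diff_zero of_nat_0 of_nat_dvd_iff of_nat_power)
      hence "\<phi> (qp_of_rat (of_nat c)) = \<phi> (qp_of_rat (of_nat 0))" by (rule A)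
      thus ?thesis using Z by simp
    qed
    show "\<phi> (qp_of_rat (of_nat a / of_nat CARD('p) ^ n)) = 0" if "\<not> CARD('p) ^ n dvd a" for a n
    proof (rule ccontr)
      assume "\<phi> (qp_of_rat (of_nat a / of_nat CARD('p) ^ n)) \<noteq> 0"
      hence "qp_norm (qp_of_rat (of_nat a / of_nat CARD('p) ^ n) :: 'p qp) \<le> 1" using supp by blast
      thus False using that pt_norm_le1[OF p] by blast
    qed
  qed
qed


section \<open>Riemann sums\<close>

definition RS :: "('p::finite qp \<Rightarrow> complex) \<Rightarrow> nat \<Rightarrow> complex" where
  "RS f n = (\<Sum>a<CARD('p)^(2*n). f (qp_of_rat (of_nat a / of_nat CARD('p) ^ n)) / of_nat CARD('p) ^ n)"

lemma qp_int_RS: "qp_int f = lim (RS f)"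
  unfolding qp_int_def RS_def ..

lemma qp_int_cong_samples:
  fixes f g :: "'p::finite qp \<Rightarrow> complex"
  assumes "\<And>n a. a < CARD('p)^(2*n) \<Longrightarrow> f (qp_of_rat (of_nat a / of_nat CARD('p) ^ n)) = g (qp_of_rat (of_nat a / of_nat CARD('p) ^ n) :: 'p::finite qp)"
  shows "qp_int f = qp_int g"
  unfolding qp_int_def by (rule arg_cong[where f=lim], rule ext, rule sum.cong) (auto simp: assms)

lemma RS_Zp:
  assumes p: "prime CARD('p::finite)"
    and van: "\<And>a. \<not> CARD('p) ^ n dvd a \<Longrightarrow> f (qp_of_rat (of_nat a / of_nat CARD('p) ^ n) :: 'p qp) = 0"
  shows "RS f n = (\<Sum>c<CARD('p)^n. f (qp_of_rat (of_nat c)) / of_nat CARD('p) ^ n)"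
proof -
  have p0: "CARD('p) > 0" using p prime_gt_0_nat by blast
  have "RS f n = (\<Sum>a<CARD('p)^(2*n). if CARD('p)^n dvd a then f (qp_of_rat (of_nat a / of_nat CARD('p) ^ n)) / of_nat CARD('p) ^ n else 0)"
    unfolding RS_def by (rule sum.cong) (auto simp: van)
  also have "\<dots> = (\<Sum>b<CARD('p)^(2*n-n). f (qp_of_rat (of_nat (CARD('p)^n * b) / of_nat CARD('p) ^ n)) / of_nat CARD('p) ^ n)"
    by (rule sum_mult_reduce[OF p0]) simp
  also have "\<dots> = (\<Sum>c<CARD('p)^n. f (qp_of_rat (of_nat c)) / of_nat CARD('p) ^ n)"
    using p0 by simp
  finally show ?thesis .
qed

lemma cis_shift: "cis (x + 2 * pi * of_int k) = cis x"
proof -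
  have "cis (x + 2 * pi * of_int k) = cis x * cis (2 * pi * of_int k)" by (rule cis_mult[symmetric])
  also have "cis (2 * pi * of_int k) = 1" by (rule cis_multiple_2pi) simp
  finally show ?thesis by simp
qed

lemma mult_cong_nat:
  assumes p: "prime p" and eq: "y + p^m * t = x" and x: "x \<noteq> 0" and v: "multiplicity p x < m"
  shows "y \<noteq> 0 \<and> multiplicity p y = multiplicity p x"
proof -
  have nu: "\<not> is_unit p" using p not_prime_unit by blast
  let ?v = "multiplicity p x"
  have dv: "p ^ k dvd x \<longleftrightarrow> k \<le> ?v" for k by (rule power_dvd_iff_le_multiplicity[OF x nu])
  have pm: "p ^ k dvd p ^ m * t" if "k \<le> m" for k using that by (simp add: le_imp_power_dvd)
  have y0: "y \<noteq> 0"
  proof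
    assume "y = 0"
    hence "p ^ m dvd x" using eq by auto
    thus False using dv v by simp
  qed
  have "p ^ ?v dvd y"
  proof -
    have "p ^ ?v dvd y + p^m * t" using eq dv by simp
    thus ?thesis using pm[of ?v] v by (simp add: dvd_add_left_iff)
  qed
  moreover have "\<not> p ^ Suc ?v dvd y"
  proof
    assume "p ^ Suc ?v dvd y"
    hence "p ^ Suc ?v dvd y + p^m * t" using pm[of "Suc ?v"] v by simp
    hence "p ^ Suc ?v dvd x" by (simp only: eq)
    hence "Suc ?v \<le> ?v" by (simp only: dv)
    thus False by simp
  qed
  ultimately have "multiplicity p y = ?v" by (rule multiplicity_eqI)
  thus ?thesis using y0 by simp
qed

abbreviation FJ :: "(real \<Rightarrow> real) \<Rightarrow> 'p::finite qp \<Rightarrow> complex" where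
  "FJ J \<equiv> (\<lambda>x. if qp_norm x \<le> 1 then complex_of_real (J (qp_norm x)) else 0)"

lemma Jhat_int:
  assumes p: "prime CARD('p::finite)" and hyp: "qp_int (FJ J :: 'p qp \<Rightarrow> complex) = 1"
    and d: "CARD('p) ^ n0 dvd a"
  shows "Jhat J (qp_of_rat (of_nat a / of_nat CARD('p) ^ n0) :: 'p qp) = 1"
proof -
  let ?xi = "qp_of_rat (of_nat a / of_nat CARD('p) ^ n0) :: 'p qp"
  obtain a' where a': "a = CARD('p) ^ n0 * a'" using d by blast
  have p0: "CARD('p) > 0" using p prime_gt_0_nat by blast
  have "qp_int (\<lambda>x. chi_p (?xi * x) * FJ J x) = qp_int (FJ J :: 'p qp \<Rightarrow> complex)"
  proof (rule qp_int_cong_samples)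
    fix n b
    let ?x = "qp_of_rat (of_nat b / of_nat CARD('p) ^ n) :: 'p qp"
    show "chi_p (?xi * ?x) * FJ J ?x = FJ J ?x"
    proof (cases "CARD('p) ^ n dvd b")
      case False
      thus ?thesis using pt_norm_le1[OF p, of b n] by simp
    next
      case True
      then obtain b' where b': "b = CARD('p) ^ n * b'" by blast
      have "?xi * ?x = qp_of_rat (of_int (int (a' * b')) / of_nat CARD('p) ^ 0)"
        unfolding qp_mult_rat[OF p] a' b' using p0 by simp
      hence "chi_p (?xi * ?x) = cis (2 * pi * (of_int (int (a' * b')) / real CARD('p) ^ 0))"
        using chi_rat[OF p, of "int (a' * b')" 0] by simp
      also have "\<dots> = 1" by simp
      finally show ?thesis by simp
    qed
  qed
  thus ?thesis unfolding Jhat_def qp_ft_def using hyp by simp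
qed


lemma inj_mulmod:
  assumes cp: "coprime N (u::nat)"
  shows "inj_on (\<lambda>c. (u*c) mod N) {..<N}"
proof -
  have key: "c = c'" if le: "c' \<le> c" and lt: "c < N" and eq: "(u*c) mod N = (u*c') mod N" for c c'
  proof -
    have "u*c' \<le> u*c" using le by simp
    hence "N dvd u*c - u*c'" using eq mod_eq_dvd_iff_nat by blast
    hence "N dvd u*(c - c')" by (simp add: diff_mult_distrib2)
    hence "N dvd (c - c')" using coprime_dvd_mult_right_iff[OF cp] by (simp add: mult.commute)
    moreover have "c - c' < N" using lt by simp
    ultimately have "c - c' = 0" by (metis dvd_imp_le neq0_conv not_le)
    thus ?thesis using le by simp
  qed
  show ?thesis unfolding inj_on_def
  proof (intro ballI impI)
    fix c c' assume c: "c \<in> {..<N}" and c': "c' \<in> {..<N}" and eq: "(u*c) mod N = (u*c') mod N"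
    show "c = c'"
    proof (cases "c' \<le> c")
      case True thus ?thesis using key c eq by simp
    next
      case False thus ?thesis using key[of c c'] c' eq by simp
    qed
  qed
qed

lemma Jhat_radial:
  assumes p: "prime CARD('p::finite)" and nd: "\<not> CARD('p) ^ n0 dvd a"
  shows "Jhat J (qp_of_rat (of_nat a / of_nat CARD('p) ^ n0) :: 'p qp) = Jhat_at J TYPE('p) (n0 - multiplicity CARD('p) a)"
proof -
  let ?P = "CARD('p)"
  have p0: "?P > 0" using p prime_gt_0_nat by blast
  have a0: "a \<noteq> 0"
  proof
    assume "a = 0" with nd show False by simp
  qed
  have nu: "\<not> is_unit ?P" using p not_prime_unit by blast
  define k where "k = multiplicity ?P a"
  have kn: "k < n0" using nd power_dvd_iff_le_multiplicity[OF a0 nu, of n0] unfolding k_def by simp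
  obtain u where u: "a = ?P ^ k * u" "\<not> ?P dvd u" unfolding k_def by (rule multiplicity_decompose'[OF a0 nu])
  have u0: "u \<noteq> 0" using u(2) by (metis dvd_0_right)
  have mu: "multiplicity ?P u = 0" using u(2) by (simp add: not_dvd_imp_multiplicity_0)
  define j where "j = n0 - k"
  have n0: "n0 = k + j" using kn unfolding j_def by simp
  let ?xi = "qp_of_rat (of_nat a / of_nat ?P ^ n0) :: 'p qp"
  let ?eta = "qp_of_rat (1 / of_nat ?P ^ j) :: 'p qp"
  define h where "h c = cis (2 * pi * (real c / real ?P ^ j)) * complex_of_real (J (qp_norm (qp_of_rat (of_nat c) :: 'p qp)))" for c :: nat
  have chi_xi: "chi_p (?xi * qp_of_rat (of_nat c)) = cis (2 * pi * (real (u*c) / real ?P ^ j))" for c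
  proof -
    have "?xi * qp_of_rat (of_nat c) = qp_of_rat (of_int (int (a*c)) / of_nat ?P ^ n0)"
      unfolding qp_mult_rat[OF p] by simp
    hence "chi_p (?xi * qp_of_rat (of_nat c)) = cis (2 * pi * (of_int (int (a*c)) / real ?P ^ n0))"
      using chi_rat[OF p, of "int (a*c)" n0] by simp
    also have "of_int (int (a*c)) / real ?P ^ n0 = real (u*c) / real ?P ^ j"
      unfolding n0 u(1) using p0 by (simp add: power_add field_simps)
    finally show ?thesis .
  qed
  have chi_eta: "chi_p (?eta * qp_of_rat (of_nat c)) = cis (2 * pi * (real c / real ?P ^ j))" for c
  proof -
    have "?eta * qp_of_rat (of_nat c) = qp_of_rat (of_int (int c) / of_nat ?P ^ j)"
      unfolding qp_mult_rat[OF p] by simp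
    thus ?thesis using chi_rat[OF p, of "int c" j] by simp
  qed
  have FJc: "FJ J (qp_of_rat (of_nat c) :: 'p qp) = complex_of_real (J (qp_norm (qp_of_rat (of_nat c) :: 'p qp)))" for c
    using nat_norm_le1[OF p, of c] by simp
  have van: "FJ J (qp_of_rat (of_nat b / of_nat ?P ^ m) :: 'p qp) = 0" if "\<not> ?P ^ m dvd b" for b m
    using that pt_norm_le1[OF p, of b m] by simp
  have RS1: "RS (\<lambda>x. chi_p (?xi * x) * FJ J x) m = (\<Sum>c<?P^m. cis (2 * pi * (real (u*c) / real ?P ^ j)) * complex_of_real (J (qp_norm (qp_of_rat (of_nat c) :: 'p qp)))) / of_nat ?P ^ m" for m
    by (subst RS_Zp[OF p]) (auto simp: van chi_xi FJc sum_divide_distrib)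
  have RS2: "RS (\<lambda>x. chi_p (?eta * x) * FJ J x) m = (\<Sum>c<?P^m. h c) / of_nat ?P ^ m" for m
    by (subst RS_Zp[OF p]) (auto simp: van chi_eta FJc sum_divide_distrib h_def)
  have eqm: "(\<Sum>c<?P^m. h c) = (\<Sum>c<?P^m. cis (2 * pi * (real (u*c) / real ?P ^ j)) * complex_of_real (J (qp_norm (qp_of_rat (of_nat c) :: 'p qp))))"
    if m: "m \<ge> n0" for m
  proof -
    define \<sigma> where "\<sigma> c = (u * c) mod ?P^m" for c
    have cp: "coprime (?P^m) u" using prime_imp_coprime[OF p u(2)] by simp
    have inj: "inj_on \<sigma> {..<?P^m}" unfolding \<sigma>_def by (rule inj_mulmod[OF cp])
    have img: "\<sigma> ` {..<?P^m} = {..<?P^m}"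
      by (rule endo_inj_surj) (auto simp: \<sigma>_def inj p0)
    have hs: "h (\<sigma> c) = cis (2 * pi * (real (u*c) / real ?P ^ j)) * complex_of_real (J (qp_norm (qp_of_rat (of_nat c) :: 'p qp)))"
      if c: "c < ?P^m" for c
    proof -
      define q where "q = (u*c) div ?P^m"
      have dec: "\<sigma> c + ?P^m * q = u*c" unfolding \<sigma>_def q_def by (rule mod_mult_div_eq)
      have jm: "m = j + (m - j)" using m n0 by simp
      have "real (\<sigma> c) / real ?P ^ j = real (u*c) / real ?P ^ j + of_int (- int (?P^(m-j) * q))"
      proof -
        have "real (\<sigma> c) = real (u*c) - real (?P^m) * real q" using dec by (metis add_diff_cancel_right' of_nat_add of_nat_mult)
        also have "real (?P^m) = real ?P ^ j * real ?P ^ (m - j)" by (subst jm) (simp add: power_add)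
        finally show ?thesis using p0 by (simp add: field_simps)
      qed
      hence e: "2 * pi * (real (\<sigma> c) / real ?P ^ j) = 2 * pi * (real (u*c) / real ?P ^ j) + 2 * pi * of_int (- int (?P^(m-j) * q))"
        by (simp only: distrib_left)
      have cs: "cis (2 * pi * (real (\<sigma> c) / real ?P ^ j)) = cis (2 * pi * (real (u*c) / real ?P ^ j))"
        unfolding e by (rule cis_shift)
      have ns: "qp_norm (qp_of_rat (of_nat (\<sigma> c)) :: 'p qp) = qp_norm (qp_of_rat (of_nat c) :: 'p qp)"
      proof (cases "c = 0")
        case True thus ?thesis by (simp add: \<sigma>_def)
      next
        case False
        have uc0: "u*c \<noteq> 0" using False u0 by simp
        have muc: "multiplicity ?P (u*c) = multiplicity ?P c"
          using prime_elem_multiplicity_mult_distrib[of ?P u c] p u0 False mu by simp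
        have "\<not> ?P^m dvd c" using nat_dvd_not_less[of c "?P^m"] False c by simp
        hence "multiplicity ?P c < m" using power_dvd_iff_le_multiplicity[OF False nu, of m] by simp
        hence "\<sigma> c \<noteq> 0 \<and> multiplicity ?P (\<sigma> c) = multiplicity ?P (u*c)"
          using mult_cong_nat[OF p dec uc0] muc by simp
        thus ?thesis using nat_norm[OF p] False muc by simp
      qed
      show ?thesis unfolding h_def cs ns ..
    qed
    have "(\<Sum>c<?P^m. h c) = sum h (\<sigma> ` {..<?P^m})" unfolding img ..
    also have "\<dots> = (\<Sum>c<?P^m. h (\<sigma> c))" by (simp add: sum.reindex[OF inj])
    also have "\<dots> = (\<Sum>c<?P^m. cis (2 * pi * (real (u*c) / real ?P ^ j)) * complex_of_real (J (qp_norm (qp_of_rat (of_nat c) :: 'p qp))))"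
      by (rule sum.cong) (auto simp: hs)
    finally show ?thesis .
  qed
  have "Jhat J ?xi = lim (RS (\<lambda>x. chi_p (?xi * x) * FJ J x))"
    unfolding Jhat_def qp_ft_def qp_int_RS ..
  also have "\<dots> = lim (RS (\<lambda>x. chi_p (?eta * x) * FJ J x))"
    by (rule lim_cong_ev[of n0]) (simp add: RS1 RS2 eqm)
  also have "\<dots> = Jhat J ?eta"
    unfolding Jhat_def qp_ft_def qp_int_RS ..
  also have "\<dots> = Jhat_at J TYPE('p) j" unfolding Jhat_at_def ..
  finally show ?thesis unfolding j_def k_def .
qed


lemma ift_val:
  assumes p: "prime CARD('p::finite)"
    and per: "\<And>c c'. int CARD('p) ^ L dvd (int c - int c') \<Longrightarrow> \<phi> (qp_of_rat (of_nat c) :: 'p qp) = \<phi> (qp_of_rat (of_nat c'))"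
    and van: "\<And>a n. \<not> CARD('p) ^ n dvd a \<Longrightarrow> \<phi> (qp_of_rat (of_nat a / of_nat CARD('p) ^ n) :: 'p qp) = 0"
    and nL: "L \<le> n"
  shows "qp_ift \<phi> (qp_of_rat (of_nat a / of_nat CARD('p) ^ n) :: 'p qp) =
         (\<Sum>c<CARD('p)^n. Ech CARD('p) n a c * \<phi> (qp_of_rat (of_nat c))) / of_nat CARD('p) ^ n"
proof -
  let ?P = "CARD('p)"
  let ?xi = "qp_of_rat (of_nat a / of_nat ?P ^ n) :: 'p qp"
  let ?H = "\<lambda>c. Ech ?P n a c * \<phi> (qp_of_rat (of_nat c))"
  have p0: "?P > 0" using p prime_gt_0_nat by blast
  have chi: "chi_p (- (?xi * qp_of_rat (of_nat c))) = Ech ?P n a c" for c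
  proof -
    have "- (?xi * qp_of_rat (of_nat c)) = qp_of_rat (of_int (- (int a * int c)) / of_nat ?P ^ n)"
      unfolding qp_mult_rat[OF p] qp_uminus_rat[OF p] by simp
    thus ?thesis unfolding Ech_def using chi_rat[OF p, of "- (int a * int c)" n] by simp
  qed
  have perH: "?H (c + ?P^n) = ?H c" for c
  proof -
    have "of_int (- (int a * int (c + ?P^n))) / real ?P ^ n = of_int (- (int a * int c)) / real ?P ^ n + of_int (- int a)"
      using p0 by (simp add: field_simps)
    hence "2 * pi * (of_int (- (int a * int (c + ?P^n))) / real ?P ^ n) = 2 * pi * (of_int (- (int a * int c)) / real ?P ^ n) + 2 * pi * of_int (- int a)"
      by (simp only: distrib_left)
    hence e: "Ech ?P n a (c + ?P^n) = Ech ?P n a c" unfolding Ech_def by (simp only: cis_shift)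
    have "int ?P ^ L dvd int (c + ?P^n) - int c"
      using nL by (simp add: le_imp_power_dvd)
    hence "\<phi> (qp_of_rat (of_nat (c + ?P^n))) = \<phi> (qp_of_rat (of_nat c))" by (rule per)
    thus ?thesis using e by simp
  qed
  have RSm: "RS (\<lambda>x. chi_p (- (?xi * x)) * \<phi> x) m = (\<Sum>c<?P^n. ?H c) / of_nat ?P ^ n" if m: "m \<ge> n" for m
  proof -
    have "RS (\<lambda>x. chi_p (- (?xi * x)) * \<phi> x) m = (\<Sum>c<?P^m. ?H c / of_nat ?P ^ m)"
      by (subst RS_Zp[OF p]) (auto simp: van chi)
    also have "\<dots> = (\<Sum>c<?P^(m-n) * ?P^n. ?H c) / of_nat ?P ^ m"
      using m by (simp add: sum_divide_distrib power_add[symmetric])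
    also have "\<dots> = of_nat (?P^(m-n)) * (\<Sum>c<?P^n. ?H c) / of_nat ?P ^ m"
    proof -
      have "(\<Sum>c<?P^(m-n) * ?P^n. ?H c) = of_nat (?P^(m-n)) * (\<Sum>c<?P^n. ?H c)"
        by (rule periodic_sum) (rule perH)
      thus ?thesis by simp
    qed
    also have "\<dots> = (\<Sum>c<?P^n. ?H c) / of_nat ?P ^ n"
    proof -
      have "(of_nat ?P ^ m :: complex) = of_nat (?P^(m-n)) * of_nat ?P ^ n"
        using m by (simp add: power_add[symmetric])
      thus ?thesis using p0 by simp
    qed
    finally show ?thesis .
  qed
  have "qp_ift \<phi> ?xi = lim (RS (\<lambda>x. chi_p (- (?xi * x)) * \<phi> x))"
    unfolding qp_ift_def qp_int_RS ..
  also have "\<dots> = (\<Sum>c<?P^n. ?H c) / of_nat ?P ^ n"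
    by (rule lim_ev_const[of n]) (simp add: RSm)
  finally show ?thesis .
qed

theorem lemma3:
  fixes J :: "real \<Rightarrow> real" and t :: real
  assumes "prime CARD('p::finite)"
    and "\<forall>r\<in>{0..1}. J r \<ge> 0"
    and "qp_int (\<lambda>x::'p qp. if qp_norm x \<le> 1 then complex_of_real (J (qp_norm x)) else 0) = 1"
    and "t > 0"
  shows "\<forall>\<phi> :: 'p qp \<Rightarrow> complex.
           qp_test \<phi> \<and> (\<forall>x. \<phi> x \<noteq> 0 \<longrightarrow> 0 < qp_norm x \<and> qp_norm x \<le> 1) \<longrightarrow>
           JZ0 J t \<phi> =
           qp_int (\<lambda>x. (\<Sum>j. exp (- (complex_of_real t * (1 - Jhat_at J TYPE('p) (Suc j))))
                              * (Jhat_at J TYPE('p) (Suc j) - 1)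
                              * (of_nat CARD('p) ^ Suc j * Omega (real CARD('p) ^ Suc j * qp_norm x)
                                 - of_nat CARD('p) ^ j * Omega (real CARD('p) ^ j * qp_norm x)))
                        * \<phi> x)"
proof (intro allI impI)
  fix \<phi> :: "'p qp \<Rightarrow> complex"
  assume H: "qp_test \<phi> \<and> (\<forall>x. \<phi> x \<noteq> 0 \<longrightarrow> 0 < qp_norm x \<and> qp_norm x \<le> 1)"
  have p: "prime CARD('p)" by (rule assms(1))
  have hyp: "qp_int (FJ J :: 'p qp \<Rightarrow> complex) = 1" by (rule assms(3))
  let ?P = "CARD('p)"
  have p0: "?P > 0" using p prime_gt_0_nat by blast
  have nu: "\<not> is_unit ?P" using p not_prime_unit by blast
  obtain L where L1: "\<And>c c'. int ?P ^ L dvd (int c - int c') \<Longrightarrow> \<phi> (qp_of_rat (of_nat c)) = \<phi> (qp_of_rat (of_nat c'))"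
    and L2: "\<And>c. ?P ^ L dvd c \<Longrightarrow> \<phi> (qp_of_rat (of_nat c)) = 0"
    and L3: "\<And>a n. \<not> ?P ^ n dvd a \<Longrightarrow> \<phi> (qp_of_rat (of_nat a / of_nat ?P ^ n)) = 0"
    using test_props[OF p, of \<phi>] H by blast
  define CC where "CC j = exp (- (complex_of_real t * (1 - Jhat_at J TYPE('p) j))) * (Jhat_at J TYPE('p) j - 1)" for j
  define f where "f c = \<phi> (qp_of_rat (of_nat c))" for c
  let ?G = "\<lambda>\<xi> :: 'p qp. (Jhat J \<xi> - 1) * exp (- (complex_of_real t * (1 - Jhat J \<xi>)))"
  let ?S = "\<lambda>x :: 'p qp. (\<Sum>j. exp (- (complex_of_real t * (1 - Jhat_at J TYPE('p) (Suc j))))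
                              * (Jhat_at J TYPE('p) (Suc j) - 1)
                              * (of_nat CARD('p) ^ Suc j * Omega (real CARD('p) ^ Suc j * qp_norm x)
                                 - of_nat CARD('p) ^ j * Omega (real CARD('p) ^ j * qp_norm x)))"
  have Gval: "?G (qp_of_rat (of_nat a / of_nat ?P ^ n)) = gfun ?P CC n a" for a n
  proof (cases "?P ^ n dvd a")
    case True
    thus ?thesis using Jhat_int[OF p hyp True] by (simp add: gfun_def)
  next
    case False
    thus ?thesis using Jhat_radial[OF p False, of J] by (simp add: gfun_def CC_def mult.commute)
  qed
  have Sval: "?S (qp_of_rat (of_nat c)) * f c = Tfun ?P CC n c * f c" if nL: "L \<le> n" for c n
  proof (cases "f c = 0")
    case True thus ?thesis by simp
  next
    case False
    have c0: "c \<noteq> 0"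
    proof
      assume "c = 0"
      hence "f c = 0" using L2[of 0] unfolding f_def by simp
      with False show False by simp
    qed
    have "\<not> ?P ^ L dvd c" using False L2 unfolding f_def by auto
    hence vL: "multiplicity ?P c < L" using power_dvd_iff_le_multiplicity[OF c0 nu, of L] by simp
    have ind0: "ind ?P j c = 0" if "j \<ge> n" for j
      using power_dvd_iff_le_multiplicity[OF c0 nu, of j] that nL vL by (simp add: ind_def)
    have trm: "exp (- (complex_of_real t * (1 - Jhat_at J TYPE('p) (Suc j))))
                              * (Jhat_at J TYPE('p) (Suc j) - 1)
                              * (of_nat CARD('p) ^ Suc j * Omega (real CARD('p) ^ Suc j * qp_norm (qp_of_rat (of_nat c) :: 'p qp))
                                 - of_nat CARD('p) ^ j * Omega (real CARD('p) ^ j * qp_norm (qp_of_rat (of_nat c) :: 'p qp)))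
          = CC (Suc j) * (of_nat ?P ^ Suc j * ind ?P (Suc j) c - of_nat ?P ^ j * ind ?P j c)" for j
      unfolding Omega_nat[OF p c0] CC_def ..
    have "?S (qp_of_rat (of_nat c)) = (\<Sum>j. CC (Suc j) * (of_nat ?P ^ Suc j * ind ?P (Suc j) c - of_nat ?P ^ j * ind ?P j c))"
      unfolding trm ..
    also have "\<dots> = (\<Sum>j\<in>{..<n}. CC (Suc j) * (of_nat ?P ^ Suc j * ind ?P (Suc j) c - of_nat ?P ^ j * ind ?P j c))"
      by (rule suminf_finite) (auto simp: ind0)
    also have "\<dots> = Tfun ?P CC n c" unfolding Tfun_def ..
    finally show ?thesis by simp
  qed
  have eqn: "RS (\<lambda>\<xi>. ?G \<xi> * qp_ift \<phi> \<xi>) n = RS (\<lambda>x. ?S x * \<phi> x) n" if nL: "n \<ge> L" for n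
  proof -
    have "RS (\<lambda>\<xi>. ?G \<xi> * qp_ift \<phi> \<xi>) n =
       (\<Sum>a<?P^(2*n). gfun ?P CC n a * ((\<Sum>c<?P^n. Ech ?P n a c * f c) / of_nat ?P ^ n) / of_nat ?P ^ n)"
      unfolding RS_def Gval
    proof (rule sum.cong[OF refl])
      fix a
      have "qp_ift \<phi> (qp_of_rat (of_nat a / of_nat ?P ^ n)) = (\<Sum>c<?P^n. Ech ?P n a c * \<phi> (qp_of_rat (of_nat c))) / of_nat ?P ^ n"
        by (rule ift_val[OF p L1 L3 nL])
      thus "gfun ?P CC n a * qp_ift \<phi> (qp_of_rat (of_nat a / of_nat ?P ^ n)) / of_nat ?P ^ n =
         gfun ?P CC n a * ((\<Sum>c<?P^n. Ech ?P n a c * f c) / of_nat ?P ^ n) / of_nat ?P ^ n"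
        unfolding f_def by simp
    qed
    also have "\<dots> = (\<Sum>c<?P^n. Tfun ?P CC n c * f c / of_nat ?P ^ n)" by (rule core[OF p])
    also have "\<dots> = (\<Sum>c<?P^n. ?S (qp_of_rat (of_nat c)) * f c / of_nat ?P ^ n)"
      by (rule sum.cong[OF refl]) (simp only: Sval[OF nL])
    also have "\<dots> = RS (\<lambda>x. ?S x * \<phi> x) n"
      by (subst RS_Zp[OF p]) (auto simp: L3 f_def)
    finally show ?thesis .
  qed
  have "JZ0 J t \<phi> = lim (RS (\<lambda>\<xi>. ?G \<xi> * qp_ift \<phi> \<xi>))"
    unfolding JZ0_def qp_int_RS ..
  also have "\<dots> = lim (RS (\<lambda>x. ?S x * \<phi> x))"
    by (rule lim_cong_ev[of L]) (simp add: eqn)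
  also have "\<dots> = qp_int (\<lambda>x. ?S x * \<phi> x)" unfolding qp_int_RS ..
  finally show "JZ0 J t \<phi> = qp_int (\<lambda>x. ?S x * \<phi> x)" .
qed

end
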